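(* Let $G,G'$ be locally compact Hausdorff groupoids, $G$ metrizable with metric $d_{G}$ for which inversion is an isometry and $r,s$ are contractions, and let $\pi:G\to G'$ be a continuous, proper groupoid morphism such that for every unit $u\in G^0$, $\pi|_{G^{u}}:G^{u}\to (G')^{\pi(u)}$ is a homeomorphism. Suppose a sequence $x_{k}'$ converges to $x'$ in $G'$. Then $\lim_{k}\mathrm{diam}_{G}(\pi^{-1}\{x_{k}'\})=0$ if and only if $\lim_{k}\mathrm{diam}_{G}(\pi^{-1}\{r(x_{k}')\})=0$.
   Context: $G^{u}=r^{-1}\{u\}$. For a compact $E\subseteq G$, $\mathrm{diam}_{G}(E)=\sup\{d_G(x,y):x,y\in E\}$. *)

theory Defs
  imports "HOL-Analysis.Analysis"
begin

text \<open>A groupoid (Renault's definition): a carrier set G, a set C of composable pairs,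
  a partial multiplication m (meaningful on C) and an inversion i.\<close>
definition groupoid :: "'a set \<Rightarrow> ('a \<times> 'a) set \<Rightarrow> ('a \<Rightarrow> 'a \<Rightarrow> 'a) \<Rightarrow> ('a \<Rightarrow> 'a) \<Rightarrow> bool" where
  "groupoid G C m i \<longleftrightarrow>
     C \<subseteq> G \<times> G \<and>
     (\<forall>(x,y)\<in>C. m x y \<in> G) \<and>
     (\<forall>x\<in>G. i x \<in> G \<and> i (i x) = x) \<and>
     (\<forall>x\<in>G. (x, i x) \<in> C \<and> (i x, x) \<in> C) \<and>
     (\<forall>x y z. (x,y) \<in> C \<and> (y,z) \<in> C \<longrightarrow>
        (m x y, z) \<in> C \<and> (x, m y z) \<in> C \<and> m (m x y) z = m x (m y z)) \<and>
     (\<forall>x y. (x,y) \<in> C \<longrightarrow> m (i x) (m x y) = y \<and> m (m x y) (i y) = x)"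

definition grng :: "('a \<Rightarrow> 'a \<Rightarrow> 'a) \<Rightarrow> ('a \<Rightarrow> 'a) \<Rightarrow> 'a \<Rightarrow> 'a" where
  "grng m i x = m x (i x)"

definition gsrc :: "('a \<Rightarrow> 'a \<Rightarrow> 'a) \<Rightarrow> ('a \<Rightarrow> 'a) \<Rightarrow> 'a \<Rightarrow> 'a" where
  "gsrc m i x = m (i x) x"

definition gunits :: "'a set \<Rightarrow> ('a \<Rightarrow> 'a \<Rightarrow> 'a) \<Rightarrow> ('a \<Rightarrow> 'a) \<Rightarrow> 'a set" where
  "gunits G m i = grng m i ` G"

definition rfiber :: "'a set \<Rightarrow> ('a \<Rightarrow> 'a \<Rightarrow> 'a) \<Rightarrow> ('a \<Rightarrow> 'a) \<Rightarrow> 'a \<Rightarrow> 'a set" where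
  "rfiber G m i u = {x \<in> G. grng m i x = u}"

text \<open>Topological groupoid, locally compact Hausdorff (Hausdorffness comes from the
  ambient type class); topology on G is the subspace topology.\<close>
definition lch_groupoid :: "('a::t2_space) set \<Rightarrow> ('a \<times> 'a) set \<Rightarrow> ('a \<Rightarrow> 'a \<Rightarrow> 'a) \<Rightarrow> ('a \<Rightarrow> 'a) \<Rightarrow> bool" where
  "lch_groupoid G C m i \<longleftrightarrow>
     groupoid G C m i \<and>
     continuous_on C (\<lambda>p. m (fst p) (snd p)) \<and>
     continuous_on G i \<and>
     locally_compact_space (top_of_set G)"

definition groupoid_morphism ::
  "'a set \<Rightarrow> ('a \<times> 'a) set \<Rightarrow> ('a \<Rightarrow> 'a \<Rightarrow> 'a) \<Rightarrow>
   'b set \<Rightarrow> ('b \<times> 'b) set \<Rightarrow> ('b \<Rightarrow> 'b \<Rightarrow> 'b) \<Rightarrow> ('a \<Rightarrow> 'b) \<Rightarrow> bool" where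
  "groupoid_morphism G C m G' C' m' \<pi> \<longleftrightarrow>
     (\<forall>x\<in>G. \<pi> x \<in> G') \<and>
     (\<forall>(x,y)\<in>C. (\<pi> x, \<pi> y) \<in> C' \<and> \<pi> (m x y) = m' (\<pi> x) (\<pi> y))"

definition proper_on :: "'a::topological_space set \<Rightarrow> 'b::topological_space set \<Rightarrow> ('a \<Rightarrow> 'b) \<Rightarrow> bool" where
  "proper_on G G' \<pi> \<longleftrightarrow> (\<forall>K. K \<subseteq> G' \<and> compact K \<longrightarrow> compact (G \<inter> \<pi> -` K))"

end

theory Submission
  imports Defs "HOL-Library.Infinite_Set"
begin

lemma gr_rng_in:
  assumes "groupoid G C m i" "x \<in> G"
  shows "grng m i x \<in> G"
  using assms unfolding groupoid_def grng_def by fast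

lemma gr_rng_left:
  assumes "groupoid G C m i" "x \<in> G"
  shows "(grng m i x, x) \<in> C \<and> m (grng m i x) x = x"
proof -
  have c1: "(x, i x) \<in> C" "(i x, x) \<in> C" and ii: "i (i x) = x"
    using assms unfolding groupoid_def by auto
  have "(m x (i x), x) \<in> C" using assms c1 unfolding groupoid_def by blast
  moreover have "m (m x (i x)) (i (i x)) = x" using assms c1 unfolding groupoid_def by blast
  ultimately show ?thesis using ii by (simp add: grng_def)
qed

lemma gr_rng_rng:
  assumes "groupoid G C m i" "x \<in> G"
  shows "grng m i (grng m i x) = grng m i x"
proof -
  define e where "e = grng m i x"
  have ea: "(e, x) \<in> C" "m e x = x" using gr_rng_left[OF assms] e_def by auto
  have c1: "(x, i x) \<in> C" using assms unfolding groupoid_def by auto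
  have "(e, m x (i x)) \<in> C \<and> m (m e x) (i x) = m e (m x (i x))"
    using assms(1) ea(1) c1 unfolding groupoid_def by blast
  then have ee: "(e, e) \<in> C" "e = m e e" using ea(2) by (auto simp: e_def grng_def)
  have "m (m e e) (i e) = e" using assms(1) ee(1) unfolding groupoid_def by blast
  then have "grng m i e = e" using ee(2) by (simp add: grng_def)
  then show ?thesis by (simp add: e_def)
qed

lemma morph_rng:
  assumes "groupoid G C m i" "groupoid G' C' m' i'"
    and "groupoid_morphism G C m G' C' m' \<pi>" "x \<in> G"
  shows "\<pi> (grng m i x) = grng m' i' (\<pi> x)"
proof -
  have l: "(grng m i x, x) \<in> C" "m (grng m i x) x = x" using gr_rng_left[OF assms(1,4)] by auto
  then have c: "(\<pi> (grng m i x), \<pi> x) \<in> C'" "m' (\<pi> (grng m i x)) (\<pi> x) = \<pi> x"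
    using assms(3) unfolding groupoid_morphism_def by (metis (mono_tags, lifting) case_prodD)+
  have "m' (m' (\<pi> (grng m i x)) (\<pi> x)) (i' (\<pi> x)) = \<pi> (grng m i x)"
    using assms(2) c(1) unfolding groupoid_def by blast
  then show ?thesis using c(2) by (simp add: grng_def)
qed

lemma compact_insert_range:
  fixes f :: "nat \<Rightarrow> 'b::topological_space"
  assumes "f \<longlonglongrightarrow> l"
  shows "compact (insert l (range f))"
proof (rule compactI)
  fix C assume op: "\<forall>t\<in>C. open t" and cov: "insert l (range f) \<subseteq> \<Union>C"
  then obtain U where U: "U \<in> C" "l \<in> U" by auto
  then have "eventually (\<lambda>n. f n \<in> U) sequentially"
    using assms op topological_tendstoD by blast
  then obtain N where N: "\<And>n. n \<ge> N \<Longrightarrow> f n \<in> U" by (auto simp: eventually_sequentially)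
  have "\<forall>n. \<exists>V. V \<in> C \<and> f n \<in> V" using cov by auto
  then obtain V where V: "\<And>n. V n \<in> C \<and> f n \<in> V n" by metis
  show "\<exists>C'. C' \<subseteq> C \<and> finite C' \<and> insert l (range f) \<subseteq> \<Union>C'"
  proof (intro exI conjI)
    show "insert U (V ` {..<N}) \<subseteq> C" using U V by auto
    show "finite (insert U (V ` {..<N}))" by auto
    show "insert l (range f) \<subseteq> \<Union>(insert U (V ` {..<N}))"
    proof
      fix y assume "y \<in> insert l (range f)"
      then consider "y = l" | n where "y = f n" by auto
      then show "y \<in> \<Union>(insert U (V ` {..<N}))"
      proof cases
        case 1 then show ?thesis using U by auto
      next
        case (2 n) then show ?thesis using N V by (cases "n < N") (auto simp: not_less)
      qed
    qed
  qed
qed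

lemma contr_tendsto:
  fixes f :: "'a::metric_space \<Rightarrow> 'a"
  assumes "\<forall>x\<in>G. \<forall>y\<in>G. dist (f x) (f y) \<le> dist x y" "\<forall>n. X n \<in> G" "l \<in> G" "X \<longlonglongrightarrow> l"
  shows "(\<lambda>n. f (X n)) \<longlonglongrightarrow> f l"
proof -
  have "(\<lambda>n. dist (X n) l) \<longlonglongrightarrow> 0" using assms(4) tendsto_dist_iff by blast
  moreover have "eventually (\<lambda>n. norm (dist (f (X n)) (f l)) \<le> dist (X n) l) sequentially"
    using assms(1-3) by auto
  ultimately have "(\<lambda>n. dist (f (X n)) (f l)) \<longlonglongrightarrow> 0" by (rule Lim_null_comparison[rotated])
  then show ?thesis using tendsto_dist_iff by blast
qed


theorem lemma7p30:
  fixes G :: "'a::metric_space set" and C :: "('a \<times> 'a) set"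
    and m :: "'a \<Rightarrow> 'a \<Rightarrow> 'a" and i :: "'a \<Rightarrow> 'a"
    and G' :: "'b::t2_space set" and C' :: "('b \<times> 'b) set"
    and m' :: "'b \<Rightarrow> 'b \<Rightarrow> 'b" and i' :: "'b \<Rightarrow> 'b"
    and \<pi> :: "'a \<Rightarrow> 'b" and xk :: "nat \<Rightarrow> 'b" and x' :: 'b
  assumes "lch_groupoid G C m i"
    and "lch_groupoid G' C' m' i'"
    and "\<forall>x\<in>G. \<forall>y\<in>G. dist (i x) (i y) = dist x y"
    and "\<forall>x\<in>G. \<forall>y\<in>G. dist (grng m i x) (grng m i y) \<le> dist x y"
    and "\<forall>x\<in>G. \<forall>y\<in>G. dist (gsrc m i x) (gsrc m i y) \<le> dist x y"
    and "groupoid_morphism G C m G' C' m' \<pi>"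
    and "continuous_on G \<pi>"
    and "proper_on G G' \<pi>"
    and "\<forall>u\<in>gunits G m i. \<exists>g. homeomorphism (rfiber G m i u) (rfiber G' m' i' (\<pi> u)) \<pi> g"
    and "\<forall>k. xk k \<in> G'" and "x' \<in> G'" and "xk \<longlonglongrightarrow> x'"
  shows "(\<lambda>k. diameter (G \<inter> \<pi> -` {xk k})) \<longlonglongrightarrow> 0 \<longleftrightarrow>
         (\<lambda>k. diameter (G \<inter> \<pi> -` {grng m' i' (xk k)})) \<longlonglongrightarrow> 0"
proof -
  note gG = assms(1)[unfolded lch_groupoid_def, THEN conjunct1]
  note gG' = assms(2)[unfolded lch_groupoid_def, THEN conjunct1]
  define r where "r = grng m i"
  define r' where "r' = grng m' i'"
  define F where "F k = G \<inter> \<pi> -` {xk k}" for k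
  define R where "R k = G \<inter> \<pi> -` {r' (xk k)}" for k
  have contr: "\<forall>x\<in>G. \<forall>y\<in>G. dist (r x) (r y) \<le> dist x y" using assms(4) r_def by simp
  have piG: "\<And>x. x \<in> G \<Longrightarrow> \<pi> x \<in> G'" using assms(6) unfolding groupoid_morphism_def by blast
  have rG: "\<And>x. x \<in> G \<Longrightarrow> r x \<in> G" using gr_rng_in[OF gG] r_def by simp
  have pir: "\<And>x. x \<in> G \<Longrightarrow> \<pi> (r x) = r' (\<pi> x)"
    using morph_rng[OF gG gG' assms(6)] r_def r'_def by simp
  have rr: "\<And>x. x \<in> G \<Longrightarrow> r (r x) = r x" using gr_rng_rng[OF gG] r_def by simp
  have homeo: "\<And>x. x \<in> G \<Longrightarrow> \<exists>g. homeomorphism (rfiber G m i (r x)) (rfiber G' m' i' (\<pi> (r x))) \<pi> g"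
    using assms(9) unfolding gunits_def r_def by blast
  have inj: "\<And>x y. x \<in> G \<Longrightarrow> y \<in> G \<Longrightarrow> r x = r y \<Longrightarrow> \<pi> x = \<pi> y \<Longrightarrow> x = y"
  proof -
    fix x y assume xy: "x \<in> G" "y \<in> G" "r x = r y" "\<pi> x = \<pi> y"
    obtain g where g: "homeomorphism (rfiber G m i (r x)) (rfiber G' m' i' (\<pi> (r x))) \<pi> g"
      using homeo xy(1) by blast
    have "x \<in> rfiber G m i (r x)" "y \<in> rfiber G m i (r x)"
      using xy unfolding rfiber_def r_def by auto
    then show "x = y" using g xy(4) unfolding homeomorphism_def by metis
  qed
  have Fc: "compact (F k)" for k
    using assms(8) assms(10) unfolding proper_on_def F_def by auto
  have Rc: "compact (R k)" for k
  proof -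
    have "r' (xk k) \<in> G'" using assms(10) gr_rng_in[OF gG'] r'_def by simp
    then show ?thesis using assms(8) unfolding proper_on_def R_def by auto
  qed
  have Fb: "bounded (F k)" and Rb: "bounded (R k)" for k
    using Fc Rc compact_imp_bounded by auto
  have FR: "\<And>y k. y \<in> F k \<Longrightarrow> r y \<in> R k"
    using rG pir unfolding F_def R_def by auto
  have RF: "\<exists>y\<in>F k. r y = z" if z: "z \<in> R k" for z k
  proof -
    have zG: "z \<in> G" and pz: "\<pi> z = r' (xk k)" using z R_def by auto
    define u where "u = r z"
    have uG: "u \<in> G" using rG zG u_def by simp
    have pu: "\<pi> u = r' (xk k)"
      using pir[OF zG] pz rr gr_rng_rng[OF gG' assms(10)[rule_format, of k]] u_def r'_def by simp
    obtain g where g: "homeomorphism (rfiber G m i u) (rfiber G' m' i' (\<pi> u)) \<pi> g"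
      using homeo zG u_def by blast
    have "xk k \<in> rfiber G' m' i' (\<pi> u)" using pu assms(10) unfolding rfiber_def r'_def by auto
    then obtain y where y: "y \<in> rfiber G m i u" "\<pi> y = xk k"
      using g unfolding homeomorphism_def by (metis imageE)
    have yG: "y \<in> G" and ry: "r y = u" using y unfolding rfiber_def r_def by auto
    have "z = u" using inj[OF zG uG] rr[OF zG] u_def pu pz by simp
    then show ?thesis using y yG ry F_def by auto
  qed
  have dle: "diameter (R k) \<le> diameter (F k)" for k
  proof (cases "R k = {}")
    case True then show ?thesis using diameter_ge_0[OF Fb] by simp
  next
    case False
    have "(SUP (x,y)\<in>R k \<times> R k. dist x y) \<le> diameter (F k)"
    proof (rule cSUP_least)
      show "R k \<times> R k \<noteq> {}" using False by simp
      fix p assume "p \<in> R k \<times> R k"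
      then obtain a b where ab: "p = (a,b)" "a \<in> R k" "b \<in> R k" by auto
      obtain y where y: "y \<in> F k" "r y = a" using RF ab(2) by blast
      obtain y' where y': "y' \<in> F k" "r y' = b" using RF ab(3) by blast
      have "dist a b \<le> dist y y'" using contr y y' F_def by auto
      also have "\<dots> \<le> diameter (F k)" using diameter_bounded_bound[OF Fb y(1) y'(1)] .
      finally show "(case p of (x, y) \<Rightarrow> dist x y) \<le> diameter (F k)" using ab by simp
    qed
    then show ?thesis using False by (simp add: diameter_def)
  qed
  have "(\<lambda>k. diameter (F k)) \<longlonglongrightarrow> 0 \<longleftrightarrow> (\<lambda>k. diameter (R k)) \<longlonglongrightarrow> 0"
  proof
    assume H: "(\<lambda>k. diameter (F k)) \<longlonglongrightarrow> 0"
    show "(\<lambda>k. diameter (R k)) \<longlonglongrightarrow> 0"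
      by (rule real_tendsto_sandwich[of "\<lambda>_. 0" _ _ "\<lambda>k. diameter (F k)"])
         (use H dle diameter_ge_0[OF Rb] in auto)
  next
    assume H: "(\<lambda>k. diameter (R k)) \<longlonglongrightarrow> 0"
    show "(\<lambda>k. diameter (F k)) \<longlonglongrightarrow> 0"
    proof (rule ccontr)
      assume "\<not> ?thesis"
      then obtain \<epsilon> where \<epsilon>: "\<epsilon> > 0" "\<forall>N. \<exists>k\<ge>N. \<epsilon> \<le> diameter (F k)"
        unfolding LIMSEQ_def using diameter_ge_0[OF Fb] by (auto simp: not_less)
      have "infinite {k. \<epsilon> \<le> diameter (F k)}"
        using \<epsilon>(2) by (simp add: infinite_nat_iff_unbounded_le)
      then obtain \<sigma> :: "nat \<Rightarrow> nat" where \<sigma>: "strict_mono \<sigma>" "\<And>n. \<epsilon> \<le> diameter (F (\<sigma> n))"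
        using infinite_enumerate by blast
      have "\<forall>n. \<exists>p. fst p \<in> F (\<sigma> n) \<and> snd p \<in> F (\<sigma> n) \<and> \<epsilon>/2 < dist (fst p) (snd p)"
      proof
        fix n
        have "\<epsilon>/2 < diameter (F (\<sigma> n))" using \<sigma>(2)[of n] \<epsilon>(1) by simp
        then obtain a b where "a \<in> F (\<sigma> n)" "b \<in> F (\<sigma> n)" "\<epsilon>/2 < dist a b"
          using diameter_lower_bounded[OF Fb, of "\<epsilon>/2" "\<sigma> n"] \<epsilon>(1) by (meson half_gt_zero)
        then show "\<exists>p. fst p \<in> F (\<sigma> n) \<and> snd p \<in> F (\<sigma> n) \<and> \<epsilon>/2 < dist (fst p) (snd p)"
          by (intro exI[of _ "(a,b)"]) simp
      qed
      then have "\<exists>p. \<forall>n. fst (p n) \<in> F (\<sigma> n) \<and> snd (p n) \<in> F (\<sigma> n) \<and> \<epsilon>/2 < dist (fst (p n)) (snd (p n))"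
        by (rule choice)
      then obtain p where p0: "\<forall>n. fst (p n) \<in> F (\<sigma> n) \<and> snd (p n) \<in> F (\<sigma> n) \<and> \<epsilon>/2 < dist (fst (p n)) (snd (p n))"
        by blast
      note p = p0[rule_format]
      define a where "a n = fst (p n)" for n
      define b where "b n = snd (p n)" for n
      define K where "K = G \<inter> \<pi> -` insert x' (range xk)"
      have "compact K"
        using assms(8) assms(10,11) compact_insert_range[OF assms(12)]
        unfolding proper_on_def K_def by (metis image_subset_iff insert_subset)
      then have sK: "seq_compact K" by (rule compact_imp_seq_compact)
      have aK: "\<forall>n. a n \<in> K" and bK: "\<forall>n. b n \<in> K"
        using p unfolding a_def b_def F_def K_def by auto
      obtain \<alpha> \<tau>1 where t1: "\<alpha> \<in> K" "strict_mono \<tau>1" "(a \<circ> \<tau>1) \<longlonglongrightarrow> \<alpha>"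
        using seq_compactE[OF sK aK] by blast
      have "\<forall>n. (b \<circ> \<tau>1) n \<in> K" using bK by simp
      then obtain \<beta> \<tau>2 where t2: "\<beta> \<in> K" "strict_mono \<tau>2" "((b \<circ> \<tau>1) \<circ> \<tau>2) \<longlonglongrightarrow> \<beta>"
        using seq_compactE[OF sK] by blast
      define \<tau> where "\<tau> = \<tau>1 \<circ> \<tau>2"
      have at: "(\<lambda>n. a (\<tau> n)) \<longlonglongrightarrow> \<alpha>"
        using LIMSEQ_subseq_LIMSEQ[OF t1(3) t2(2)] unfolding \<tau>_def comp_def by simp
      have bt: "(\<lambda>n. b (\<tau> n)) \<longlonglongrightarrow> \<beta>" using t2(3) unfolding \<tau>_def comp_def by simp
      have tm: "strict_mono (\<sigma> \<circ> \<tau>)" unfolding \<tau>_def o_assoc by (intro strict_mono_o \<sigma>(1) t1(2) t2(2))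
      have aF: "a (\<tau> n) \<in> F (\<sigma> (\<tau> n))" and bF: "b (\<tau> n) \<in> F (\<sigma> (\<tau> n))" for n
        using p a_def b_def by auto
      have aG: "\<forall>n. a (\<tau> n) \<in> G" and bG: "\<forall>n. b (\<tau> n) \<in> G" using aF bF F_def by auto
      have \<alpha>G: "\<alpha> \<in> G" and \<beta>G: "\<beta> \<in> G" using t1(1) t2(1) K_def by auto
      have xl: "(\<lambda>n. xk (\<sigma> (\<tau> n))) \<longlonglongrightarrow> x'"
        using LIMSEQ_subseq_LIMSEQ[OF assms(12) tm] by (simp add: comp_def)
      have "(\<lambda>n. \<pi> (a (\<tau> n))) \<longlonglongrightarrow> \<pi> \<alpha>"
        using continuous_on_tendsto_compose[OF assms(7) at \<alpha>G] aG by simp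
      moreover have "(\<lambda>n. \<pi> (a (\<tau> n))) = (\<lambda>n. xk (\<sigma> (\<tau> n)))" using aF F_def by auto
      ultimately have "(\<lambda>n. xk (\<sigma> (\<tau> n))) \<longlonglongrightarrow> \<pi> \<alpha>" by simp
      then have pa: "\<pi> \<alpha> = x'" by (rule LIMSEQ_unique[OF _ xl])
      have "(\<lambda>n. \<pi> (b (\<tau> n))) \<longlonglongrightarrow> \<pi> \<beta>"
        using continuous_on_tendsto_compose[OF assms(7) bt \<beta>G] bG by simp
      moreover have "(\<lambda>n. \<pi> (b (\<tau> n))) = (\<lambda>n. xk (\<sigma> (\<tau> n)))" using bF F_def by auto
      ultimately have "(\<lambda>n. xk (\<sigma> (\<tau> n))) \<longlonglongrightarrow> \<pi> \<beta>" by simp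
      then have pb: "\<pi> \<beta> = x'" by (rule LIMSEQ_unique[OF _ xl])
      have ra: "(\<lambda>n. r (a (\<tau> n))) \<longlonglongrightarrow> r \<alpha>" using contr_tendsto[OF contr aG \<alpha>G at] .
      have rb: "(\<lambda>n. r (b (\<tau> n))) \<longlonglongrightarrow> r \<beta>" using contr_tendsto[OF contr bG \<beta>G bt] .
      have d1: "(\<lambda>n. dist (r (a (\<tau> n))) (r (b (\<tau> n)))) \<longlonglongrightarrow> dist (r \<alpha>) (r \<beta>)"
        using tendsto_dist[OF ra rb] .
      have d2: "(\<lambda>n. diameter (R (\<sigma> (\<tau> n)))) \<longlonglongrightarrow> 0"
        using LIMSEQ_subseq_LIMSEQ[OF H tm] by (simp add: comp_def)
      have "dist (r (a (\<tau> n))) (r (b (\<tau> n))) \<le> diameter (R (\<sigma> (\<tau> n)))" for n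
        using diameter_bounded_bound[OF Rb FR[OF aF] FR[OF bF]] .
      then have "dist (r \<alpha>) (r \<beta>) \<le> 0" by (intro LIMSEQ_le[OF d1 d2]) auto
      then have "r \<alpha> = r \<beta>" by simp
      then have "\<alpha> = \<beta>" using inj[OF \<alpha>G \<beta>G] pa pb by simp
      have "(\<lambda>n. dist (a (\<tau> n)) (b (\<tau> n))) \<longlonglongrightarrow> dist \<alpha> \<beta>" using tendsto_dist[OF at bt] .
      moreover have "\<epsilon>/2 \<le> dist (a (\<tau> n)) (b (\<tau> n))" for n
        using p[of "\<tau> n"] unfolding a_def b_def by simp
      ultimately have "\<epsilon>/2 \<le> dist \<alpha> \<beta>" by (intro LIMSEQ_le_const) auto
      then show False using \<open>\<alpha> = \<beta>\<close> \<epsilon>(1) by simp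
    qed
  qed
  then show ?thesis unfolding F_def R_def r'_def .
qed

end
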